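(* There exist a stochastic two-armed bandit environment and two base algorithms $\mathcal{B}_1,\mathcal{B}_2$ for it, where $\mathcal{B}_1$ always plays an optimal arm (so $\mathcal{B}_1$ has zero regret), such that the following holds: when the two base algorithms are handed to the master in a uniformly random order, every master algorithm has regret $R(T)=\Omega\!\left(\frac{\sqrt{T}}{\log T}\right)$, i.e. there are constants $c>0$ and $T_0$, independent of the master, with $R(T)\ge c\,\frac{\sqrt T}{\log T}$ for all $T\ge T_0$.
   Context: Model selection (algorithm selection) problem: there is a stochastic $K$-armed bandit environment in which arm $a$ has a fixed reward distribution with mean $\mu_a$; let $\mu^*=\max_a\mu_a$. There are $M$ base algorithms (arbitrary, possibly randomized, bandit algorithms with internal state). A master algorithm interacts for $T$ rounds: in round $t$ it selects an index $j_t\in\{1,\dots,M\}$ based on its past observations; base $j_t$ chooses an arm $a_t$ according to its current state, the arm is played, the reward is observed by the master and passed to base $j_t$, which updates its state; bases not selected do not update. The regret of the master is $R(T)=T\mu^*-\mathbb{E}\big[\sum_{t=1}^T\mu_{a_t}\big]$, the expectation being over all randomness (including the random order of the bases). *)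

theory Defs
  imports "HOL-Probability.Probability"
begin

type_synonym env = "bool \<Rightarrow> real pmf"

text \<open>A (possibly randomized) base algorithm, in behavioural form: given its own past
  observations (arms it played and rewards it received, only in rounds where it was
  selected), it gives the distribution of the next arm.\<close>
type_synonym base_alg = "(bool \<times> real) list \<Rightarrow> bool pmf"

text \<open>A (possibly randomized) master over M = 2 bases (indices are \<open>bool\<close>), in behavioural
  form: given its past observations (selected indices and observed rewards), it gives the
  distribution of the next index.\<close>
type_synonym master_alg = "(bool \<times> real) list \<Rightarrow> bool pmf"

text \<open>System state: master history, histories of the two base slots, arms played so far.\<close>
type_synonym sys_state = "(bool \<times> real) list \<times> (bool \<Rightarrow> (bool \<times> real) list) \<times> bool list"

definition arm_mean :: "env \<Rightarrow> bool \<Rightarrow> real" where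
  "arm_mean nu a = measure_pmf.expectation (nu a) (\<lambda>x. x)"

definition opt_mean :: "env \<Rightarrow> real" where
  "opt_mean nu = max (arm_mean nu True) (arm_mean nu False)"

definition sys_step :: "env \<Rightarrow> (bool \<Rightarrow> base_alg) \<Rightarrow> master_alg \<Rightarrow> sys_state \<Rightarrow> sys_state pmf" where
  "sys_step nu B m s = (case s of (mh, bh, arms) \<Rightarrow>
     bind_pmf (m mh) (\<lambda>j.
     bind_pmf (B j (bh j)) (\<lambda>a.
     bind_pmf (nu a) (\<lambda>r.
     return_pmf (mh @ [(j, r)], bh(j := bh j @ [(a, r)]), arms @ [a])))))"

fun sys_run :: "env \<Rightarrow> (bool \<Rightarrow> base_alg) \<Rightarrow> master_alg \<Rightarrow> nat \<Rightarrow> sys_state pmf" where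
  "sys_run nu B m 0 = return_pmf ([], (\<lambda>_. []), [])"
| "sys_run nu B m (Suc t) = bind_pmf (sys_run nu B m t) (sys_step nu B m)"

definition expected_reward :: "env \<Rightarrow> (bool \<Rightarrow> base_alg) \<Rightarrow> master_alg \<Rightarrow> nat \<Rightarrow> real" where
  "expected_reward nu B m T =
     measure_pmf.expectation (sys_run nu B m T) (\<lambda>s. \<Sum>a\<leftarrow>snd (snd s). arm_mean nu a)"

text \<open>Regret of master m when bases B1, B2 are put into the two slots in a uniformly
  random order (averaging over the two orders).\<close>
definition master_regret :: "env \<Rightarrow> base_alg \<Rightarrow> base_alg \<Rightarrow> master_alg \<Rightarrow> nat \<Rightarrow> real" where
  "master_regret nu B1 B2 m T =
     real T * opt_mean nu
     - (1/2) * (expected_reward nu (\<lambda>j. if j then B2 else B1) m T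
              + expected_reward nu (\<lambda>j. if j then B1 else B2) m T)"

end

theory Submission
  imports Defs
begin

lemma E_bind:
  fixes h :: "'b \<Rightarrow> real"
  assumes "finite (set_pmf p)" "\<And>x. x \<in> set_pmf p \<Longrightarrow> finite (set_pmf (f x))"
  shows "measure_pmf.expectation (bind_pmf p f) h = measure_pmf.expectation p (\<lambda>x. measure_pmf.expectation (f x) h)"
  apply (subst pmf_expectation_bind[of "set_pmf p"])
  using assms apply auto[3]
  apply (subst integral_measure_pmf[of "set_pmf p"])
  using assms by auto

lemma E_cong:
  fixes f g :: "'a \<Rightarrow> real"
  assumes "\<And>x. x \<in> set_pmf p \<Longrightarrow> f x = g x"
  shows "measure_pmf.expectation p f = measure_pmf.expectation p g"
  by (rule integral_cong_AE) (auto simp: AE_measure_pmf_iff assms)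

lemma E_mono:
  fixes f g :: "'a \<Rightarrow> real"
  assumes "finite (set_pmf p)" "\<And>x. x \<in> set_pmf p \<Longrightarrow> f x \<le> g x"
  shows "measure_pmf.expectation p f \<le> measure_pmf.expectation p g"
  using assms by (intro integral_mono_AE) (auto simp: AE_measure_pmf_iff integrable_measure_pmf_finite)

lemma E_bool:
  fixes f :: "bool \<Rightarrow> real"
  shows "measure_pmf.expectation p f = pmf p True * f True + pmf p False * f False"
  by (subst integral_measure_pmf_real[of UNIV]) (auto simp: UNIV_bool)

definition aa :: real where "aa = 1/20"
definition eps :: "nat \<Rightarrow> real" where "eps n = aa / (sqrt (real n + 3) * ln (real n + 3))"
definition nu0 :: env where
  "nu0 b = (if b then map_pmf (\<lambda>x. if x then 1 else 0) (bernoulli_pmf (1/2)) else return_pmf 0)"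
definition Bopt :: base_alg where "Bopt h = return_pmf True"
definition Bbad :: base_alg where "Bbad h = bernoulli_pmf (1 - eps (length h))"
definition BB :: "bool \<Rightarrow> bool \<Rightarrow> base_alg" where "BB j2 j = (if j = j2 then Bbad else Bopt)"
definition cnt :: "bool \<Rightarrow> (bool \<times> real) list \<Rightarrow> nat" where
  "cnt j mh = length (filter (\<lambda>p. fst p = j) mh)"
definition SS :: "nat \<Rightarrow> real" where "SS k = (\<Sum>n<k. eps n / 2)"
definition q :: "bool \<Rightarrow> bool \<Rightarrow> nat \<Rightarrow> real \<Rightarrow> real" where
  "q j2 j n r = (if j = j2 then (if r = 1 then (1 - eps n)/2 else (1 + eps n)/2) else 1/2)"
definition invs :: "nat \<Rightarrow> sys_state \<Rightarrow> bool" where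
  "invs t s = (length (fst s) = t \<and> (\<forall>j. length (fst (snd s) j) = cnt j (fst s)))"

lemma ln2_ge: "ln (2::real) \<ge> 1/2"
proof -
  have "ln (1/2::real) \<le> 1/2 - 1" by (rule ln_le_minus_one) auto
  then show ?thesis by (simp add: ln_div)
qed

lemma eps_pos: "eps n > 0"
proof -
  have "ln (real n + 3) > 0" by simp
  then show ?thesis unfolding eps_def aa_def by simp
qed

lemma eps_le: "eps n \<le> 1/10"
proof -
  have "ln (real n + 3) \<ge> ln 2" by simp
  hence l: "ln (real n + 3) \<ge> 1/2" using ln2_ge by linarith
  have s: "sqrt (real n + 3) \<ge> 1" by simp
  have "sqrt (real n + 3) * ln (real n + 3) \<ge> 1 * (1/2)"
    using l s by (intro mult_mono) auto
  then show ?thesis unfolding eps_def aa_def by (simp add: field_simps)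
qed

lemma fin_nu0: "finite (set_pmf (nu0 a))"
  by (auto simp: nu0_def)

lemma set_nu0: "set_pmf (nu0 a) \<subseteq> {0,1}"
  by (auto simp: nu0_def)

lemma E_nu0_True: "measure_pmf.expectation (nu0 True) (K :: real \<Rightarrow> real) = (K 0 + K 1) / 2"
  by (simp add: nu0_def E_bool)

lemma E_nu0_False: "measure_pmf.expectation (nu0 False) (K :: real \<Rightarrow> real) = K 0"
  by (simp add: nu0_def)

lemma step_exp:
  fixes F :: "sys_state \<Rightarrow> real"
  assumes "\<And>a. finite (set_pmf (nu a))"
  shows "measure_pmf.expectation (sys_step nu B m (mh, bh, arms)) F =
    measure_pmf.expectation (m mh) (\<lambda>j. measure_pmf.expectation (B j (bh j)) (\<lambda>a.
      measure_pmf.expectation (nu a) (\<lambda>r. F (mh @ [(j, r)], bh(j := bh j @ [(a, r)]), arms @ [a]))))"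
  unfolding sys_step_def
  using assms by (simp add: E_bind)

lemma fin_step: "finite (set_pmf (sys_step nu0 B m s))"
  unfolding sys_step_def by (auto simp: fin_nu0 split: prod.splits)

lemma fin_run: "finite (set_pmf (sys_run nu0 B m t))"
  by (induction t) (auto simp: fin_step)

lemma cnt_snoc: "cnt j (mh @ [(j', r)]) = cnt j mh + (if j' = j then 1 else 0)"
  by (simp add: cnt_def)

lemma set_step:
  assumes "s' \<in> set_pmf (sys_step nu B m (mh, bh, arms))"
  shows "\<exists>j a r. s' = (mh @ [(j, r)], bh(j := bh j @ [(a, r)]), arms @ [a])"
  using assms unfolding sys_step_def by auto

lemma inv_run: "s \<in> set_pmf (sys_run nu B m t) \<Longrightarrow> invs t s"
proof (induction t arbitrary: s)
  case 0
  then show ?case by (simp add: invs_def cnt_def)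
next
  case (Suc t)
  then obtain s0 where s0: "s0 \<in> set_pmf (sys_run nu B m t)" "s \<in> set_pmf (sys_step nu B m s0)"
    by auto
  obtain mh bh arms where e: "s0 = (mh, bh, arms)" by (cases s0) auto
  from s0 e obtain j a r where s: "s = (mh @ [(j, r)], bh(j := bh j @ [(a, r)]), arms @ [a])"
    using set_step by blast
  have "invs t s0" using Suc s0 by auto
  then show ?case using s e by (auto simp: invs_def cnt_snoc)
qed

lemma arm_mean_T: "arm_mean nu0 True = 1/2"
  by (simp add: arm_mean_def E_nu0_True)
lemma arm_mean_F: "arm_mean nu0 False = 0"
  by (simp add: arm_mean_def E_nu0_False)

lemma E_BB:
  fixes K :: "real \<Rightarrow> real"
  shows "measure_pmf.expectation (BB j2 j h) (\<lambda>a. measure_pmf.expectation (nu0 a) K)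
     = q j2 j (length h) 0 * K 0 + q j2 j (length h) 1 * K 1"
proof -
  have e: "0 \<le> eps (length h)" "eps (length h) \<le> 1" using eps_pos[of "length h"] eps_le[of "length h"] by auto
  show ?thesis
    using e by (auto simp: BB_def Bbad_def Bopt_def E_bool E_nu0_True E_nu0_False q_def field_simps)
qed

lemma E_BB_arm:
  fixes K :: "bool \<Rightarrow> real"
  shows "measure_pmf.expectation (BB j2 j h) K
     = (if j = j2 then (1 - eps (length h)) * K True + eps (length h) * K False else K True)"
proof -
  have e: "0 \<le> eps (length h)" "eps (length h) \<le> 1" using eps_pos[of "length h"] eps_le[of "length h"] by auto
  show ?thesis
    using e by (auto simp: BB_def Bbad_def Bopt_def E_bool)
qed

lemma step_mh:
  fixes F :: "(bool \<times> real) list \<Rightarrow> real"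
  assumes "invs t s"
  shows "measure_pmf.expectation (sys_step nu0 (BB j2) m s) (\<lambda>s'. F (fst s')) =
    measure_pmf.expectation (m (fst s)) (\<lambda>j. q j2 j (cnt j (fst s)) 0 * F (fst s @ [(j, 0)])
                                          + q j2 j (cnt j (fst s)) 1 * F (fst s @ [(j, 1)]))"
proof -
  obtain mh bh arms where e: "s = (mh, bh, arms)" by (cases s) auto
  have l: "length (bh j) = cnt j mh" for j using assms e by (simp add: invs_def)
  show ?thesis unfolding e
    by (simp add: step_exp fin_nu0 E_BB l)
qed

definition GG :: "bool \<Rightarrow> sys_state \<Rightarrow> real" where
  "GG j2 s = (\<Sum>a\<leftarrow>snd (snd s). arm_mean nu0 a) + SS (cnt j2 (fst s))"

lemma SS_Suc: "SS (Suc k) = SS k + eps k / 2"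
  by (simp add: SS_def)

lemma step_GG:
  assumes "invs t s"
  shows "measure_pmf.expectation (sys_step nu0 (BB j2) m s) (GG j2) = GG j2 s + 1/2"
proof -
  obtain mh bh arms where e: "s = (mh, bh, arms)" by (cases s) auto
  have l: "length (bh j) = cnt j mh" for j using assms e by (simp add: invs_def)
  have i: "measure_pmf.expectation (BB j2 j (bh j))
            (\<lambda>a. measure_pmf.expectation (nu0 a)
                  (\<lambda>r. GG j2 (mh @ [(j, r)], bh(j := bh j @ [(a, r)]), arms @ [a])))
        = GG j2 (mh, bh, arms) + 1/2" for j
    by (simp add: E_BB_arm GG_def cnt_snoc l SS_Suc arm_mean_T arm_mean_F algebra_simps; simp add: field_simps)
  have "measure_pmf.expectation (sys_step nu0 (BB j2) m s) (GG j2) = GG j2 s + 1/2"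
    unfolding e by (simp add: step_exp fin_nu0 i)
  then show ?thesis by simp
qed

lemma E_add_const:
  fixes f :: "'a \<Rightarrow> real"
  assumes "finite (set_pmf p)"
  shows "measure_pmf.expectation p (\<lambda>x. f x + c) = measure_pmf.expectation p f + c"
  using assms by (simp add: integrable_measure_pmf_finite)

lemma run_GG: "measure_pmf.expectation (sys_run nu0 (BB j2) m t) (GG j2) = real t / 2"
proof (induction t)
  case 0
  then show ?case by (simp add: GG_def SS_def cnt_def)
next
  case (Suc t)
  have "measure_pmf.expectation (sys_run nu0 (BB j2) m (Suc t)) (GG j2)
     = measure_pmf.expectation (sys_run nu0 (BB j2) m t) (\<lambda>s. measure_pmf.expectation (sys_step nu0 (BB j2) m s) (GG j2))"
    by (simp add: E_bind fin_run fin_step)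
  also have "\<dots> = measure_pmf.expectation (sys_run nu0 (BB j2) m t) (\<lambda>s. GG j2 s + 1/2)"
    by (rule E_cong) (auto intro: step_GG inv_run)
  also have "\<dots> = real t / 2 + 1/2" by (simp add: E_add_const fin_run Suc)
  finally show ?case by simp
qed

lemma exp_reward:
  "expected_reward nu0 (BB j2) m t = real t / 2 - measure_pmf.expectation (sys_run nu0 (BB j2) m t) (\<lambda>s. SS (cnt j2 (fst s)))"
proof -
  have "real t / 2 = measure_pmf.expectation (sys_run nu0 (BB j2) m t) (\<lambda>s. (\<Sum>a\<leftarrow>snd (snd s). arm_mean nu0 a) + SS (cnt j2 (fst s)))"
    using run_GG[of j2 m t] unfolding GG_def by simp
  also have "\<dots> = expected_reward nu0 (BB j2) m t + measure_pmf.expectation (sys_run nu0 (BB j2) m t) (\<lambda>s. SS (cnt j2 (fst s)))"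
    unfolding expected_reward_def
    by (rule Bochner_Integration.integral_add) (auto simp: integrable_measure_pmf_finite fin_run)
  finally show ?thesis by linarith
qed

definition rat :: "bool \<Rightarrow> nat \<Rightarrow> real \<Rightarrow> real" where
  "rat j n r = q False j n r / q True j n r"

definition Lf :: "(bool \<times> real) list \<Rightarrow> real" where
  "Lf mh = (\<Prod>i<length mh. rat (fst (mh ! i)) (cnt (fst (mh ! i)) (take i mh)) (snd (mh ! i)))"

lemma Lf_snoc: "Lf (mh @ [(j, r)]) = Lf mh * rat j (cnt j mh) r"
proof -
  have "(\<Prod>i<length mh. rat (fst ((mh @ [(j, r)]) ! i)) (cnt (fst ((mh @ [(j, r)]) ! i)) (take i (mh @ [(j, r)]))) (snd ((mh @ [(j, r)]) ! i)))
      = (\<Prod>i<length mh. rat (fst (mh ! i)) (cnt (fst (mh ! i)) (take i mh)) (snd (mh ! i)))"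
    by (rule prod.cong) (auto simp: nth_append)
  then show ?thesis unfolding Lf_def by simp
qed

lemma q_pos: "q j2 j n r > 0"
  using eps_pos[of n] eps_le[of n] by (auto simp: q_def)

lemma com:
  "measure_pmf.expectation (sys_run nu0 (BB False) m t) (\<lambda>s. f (fst s))
   = measure_pmf.expectation (sys_run nu0 (BB True) m t) (\<lambda>s. Lf (fst s) * f (fst s))"
proof (induction t arbitrary: f)
  case 0
  then show ?case by (simp add: Lf_def)
next
  case (Suc t)
  define g where "g mh = measure_pmf.expectation (m mh) (\<lambda>j. q False j (cnt j mh) 0 * f (mh @ [(j, 0)])
                                          + q False j (cnt j mh) 1 * f (mh @ [(j, 1)]))" for mh
  have "measure_pmf.expectation (sys_run nu0 (BB False) m (Suc t)) (\<lambda>s. f (fst s))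
     = measure_pmf.expectation (sys_run nu0 (BB False) m t) (\<lambda>s. measure_pmf.expectation (sys_step nu0 (BB False) m s) (\<lambda>s'. f (fst s')))"
    by (simp add: E_bind fin_run fin_step)
  also have "\<dots> = measure_pmf.expectation (sys_run nu0 (BB False) m t) (\<lambda>s. g (fst s))"
    by (rule E_cong) (auto simp: g_def intro!: step_mh inv_run)
  also have "\<dots> = measure_pmf.expectation (sys_run nu0 (BB True) m t) (\<lambda>s. Lf (fst s) * g (fst s))"
    by (rule Suc)
  also have "\<dots> = measure_pmf.expectation (sys_run nu0 (BB True) m t)
        (\<lambda>s. measure_pmf.expectation (sys_step nu0 (BB True) m s) (\<lambda>s'. Lf (fst s') * f (fst s')))"
  proof (rule E_cong)
    fix s assume s: "s \<in> set_pmf (sys_run nu0 (BB True) m t)"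
    have pt: "q True j (cnt j (fst s)) r * (Lf (fst s @ [(j, r)]) * f (fst s @ [(j, r)]))
        = Lf (fst s) * (q False j (cnt j (fst s)) r * f (fst s @ [(j, r)]))" for j r
      using q_pos[of True j "cnt j (fst s)" r] by (simp add: Lf_snoc rat_def field_simps)
    show "Lf (fst s) * g (fst s) = measure_pmf.expectation (sys_step nu0 (BB True) m s) (\<lambda>s'. Lf (fst s') * f (fst s'))"
      apply (subst step_mh[where F = "\<lambda>mh. Lf mh * f mh"])
       apply (rule inv_run[OF s])
      apply (simp only: pt distrib_left[symmetric] g_def)
      by simp
  qed
  also have "\<dots> = measure_pmf.expectation (sys_run nu0 (BB True) m (Suc t)) (\<lambda>s. Lf (fst s) * f (fst s))"
    by (simp add: E_bind fin_run fin_step)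
  finally show ?case .
qed

definition WW :: "nat \<Rightarrow> real" where "WW k = (\<Prod>n<k. 1 / (1 + 2 * (eps n)^2))"
definition ww :: "(bool \<times> real) list \<Rightarrow> real" where "ww mh = WW (cnt True mh) * WW (cnt False mh)"

lemma ww_snoc: "ww (mh @ [(j, r)]) = ww mh / (1 + 2 * (eps (cnt j mh))^2)"
  by (cases j) (auto simp: ww_def WW_def cnt_snoc)

lemma WW_pos: "WW k > 0"
  unfolding WW_def by (intro prod_pos) (auto simp: add_pos_nonneg)

lemma ww_pos: "ww mh > 0"
  by (simp add: ww_def WW_pos)

lemma aux_frac: "(x::real) \<noteq> 0 \<Longrightarrow> y \<noteq> 0 \<Longrightarrow> x + y = 2 \<Longrightarrow> 1/(2*x) + 1/(2*y) = 1/(y*x)"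
  by (simp add: field_simps)

lemma key_chi:
  "q True j n 0 * (rat j n 0)^2 + q True j n 1 * (rat j n 1)^2 \<le> 1 + 2 * (eps n)^2"
proof -
  define e where "e = eps n"
  have e: "0 < e" "e \<le> 1/10" using eps_pos[of n] eps_le[of n] by (auto simp: e_def)
  show ?thesis
  proof (cases j)
    case True
    have q0: "q True j n 0 = (1+e)/2" and q1: "q True j n 1 = (1-e)/2"
      using True by (auto simp: q_def e_def)
    have r0: "rat j n 0 = 1/(1+e)" and r1: "rat j n 1 = 1/(1-e)"
      using True e by (auto simp: q_def e_def rat_def)
    have "q True j n 0 * (rat j n 0)^2 + q True j n 1 * (rat j n 1)^2 = 1 / (1 - e^2)"
    proof -
      have ne1: "1 + e \<noteq> 0" "1 - e \<noteq> 0" using e by auto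
      have a: "(1+e)/2 * (1/(1+e))^2 = 1/(2*(1+e))" using ne1 by (simp add: power2_eq_square)
      have b: "(1-e)/2 * (1/(1-e))^2 = 1/(2*(1-e))" using ne1 by (simp add: power2_eq_square)
      have c: "1/(2*(1+e)) + 1/(2*(1-e)) = 1/(1-e^2)"
      proof -
        have x: "1 - e^2 = (1-e)*(1+e)" by (simp add: algebra_simps power2_eq_square)
        have "1/(2*(1+e)) + 1/(2*(1-e)) = 1/((1-e)*(1+e))" using ne1 by (intro aux_frac) auto
        then show ?thesis unfolding x .
      qed
      show ?thesis unfolding q0 q1 r0 r1 a b c ..
    qed
    also have "\<dots> \<le> 1 + 2 * e^2"
    proof -
      have "e*e \<le> (1/10)*(1/10)" using e by (intro mult_mono) auto
      then have e2: "e^2 \<le> 1/100" by (simp add: power2_eq_square)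
      have "1 \<le> (1 + 2 * e^2) * (1 - e^2)"
      proof -
        have "e^2 * e^2 \<le> e^2 * (1/100)" using e2 by (intro mult_left_mono) auto
        moreover have "(1 + 2 * e^2) * (1 - e^2) = 1 + e^2 - 2 * (e^2 * e^2)" by (simp add: algebra_simps)
        moreover have "0 \<le> e^2" by simp
        ultimately show ?thesis by linarith
      qed
      moreover have "1 - e^2 > 0" using e2 by simp
      ultimately show ?thesis by (simp add: field_simps)
    qed
    finally show ?thesis by (simp add: e_def)
  next
    case False
    have "q True j n 0 * (rat j n 0)^2 + q True j n 1 * (rat j n 1)^2 = 1 + e^2"
      using False e by (simp add: rat_def q_def e_def[symmetric] field_simps power2_eq_square)
    then show ?thesis by (simp add: e_def)
  qed
qed

lemma chi2:
  "measure_pmf.expectation (sys_run nu0 (BB True) m t) (\<lambda>s. (Lf (fst s))^2 * ww (fst s)) \<le> 1"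
proof (induction t)
  case 0
  then show ?case by (simp add: Lf_def ww_def WW_def cnt_def)
next
  case (Suc t)
  have "measure_pmf.expectation (sys_run nu0 (BB True) m (Suc t)) (\<lambda>s. (Lf (fst s))^2 * ww (fst s))
     = measure_pmf.expectation (sys_run nu0 (BB True) m t)
        (\<lambda>s. measure_pmf.expectation (sys_step nu0 (BB True) m s) (\<lambda>s'. (Lf (fst s'))^2 * ww (fst s')))"
    by (simp add: E_bind fin_run fin_step)
  also have "\<dots> \<le> measure_pmf.expectation (sys_run nu0 (BB True) m t) (\<lambda>s. (Lf (fst s))^2 * ww (fst s))"
  proof (rule E_mono[OF fin_run])
    fix s assume s: "s \<in> set_pmf (sys_run nu0 (BB True) m t)"
    define mh where "mh = fst s"
    have pt: "q True j (cnt j mh) 0 * ((Lf (mh @ [(j, 0)]))^2 * ww (mh @ [(j, 0)]))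
            + q True j (cnt j mh) 1 * ((Lf (mh @ [(j, 1)]))^2 * ww (mh @ [(j, 1)]))
          \<le> (Lf mh)^2 * ww mh" for j
    proof -
      define n where "n = cnt j mh"
      have d: "1 + 2 * (eps n)^2 > 0" by (simp add: add_pos_nonneg)
      have "q True j n 0 * ((Lf (mh @ [(j, 0)]))^2 * ww (mh @ [(j, 0)]))
            + q True j n 1 * ((Lf (mh @ [(j, 1)]))^2 * ww (mh @ [(j, 1)]))
          = ((Lf mh)^2 * ww mh) * ((q True j n 0 * (rat j n 0)^2 + q True j n 1 * (rat j n 1)^2) / (1 + 2 * (eps n)^2))"
        unfolding Lf_snoc ww_snoc n_def[symmetric] by (simp add: power_mult_distrib algebra_simps add_divide_distrib)
      also have "\<dots> \<le> ((Lf mh)^2 * ww mh) * 1"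
        apply (rule mult_left_mono)
        using key_chi[of j n] d ww_pos[of mh] by (auto simp: field_simps)
      finally show ?thesis by (simp add: n_def)
    qed
    show "measure_pmf.expectation (sys_step nu0 (BB True) m s) (\<lambda>s'. (Lf (fst s'))^2 * ww (fst s'))
        \<le> (Lf (fst s))^2 * ww (fst s)"
      apply (subst step_mh[where F = "\<lambda>mh. (Lf mh)^2 * ww mh"])
       apply (rule inv_run[OF s])
      apply (fold mh_def)
      using E_mono[of "m mh", OF _ pt] by simp
  qed
  also have "\<dots> \<le> 1" by (rule Suc)
  finally show ?case .
qed

lemma prod_ge:
  fixes x :: "nat \<Rightarrow> real"
  assumes "\<And>n. 0 \<le> x n" "\<And>n. x n \<le> 1"
  shows "(\<Prod>n<k. 1 / (1 + x n)) \<ge> 1 - (\<Sum>n<k. x n)"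
proof (induction k)
  case 0
  then show ?case by simp
next
  case (Suc k)
  define P where "P = (\<Prod>n<k. 1 / (1 + x n))"
  define S where "S = (\<Sum>n<k. x n)"
  have P0: "P \<ge> 0" unfolding P_def using assms by (intro prod_nonneg) (auto simp: add_nonneg_nonneg)
  have S0: "S \<ge> 0" unfolding S_def using assms by (intro sum_nonneg) auto
  have x: "0 \<le> x k" "x k \<le> 1" using assms by auto
  have a: "1 / (1 + x k) \<ge> 1 - x k"
  proof -
    have "(1 - x k) * (1 + x k) \<le> 1" by (simp add: algebra_simps power2_eq_square[symmetric])
    then show ?thesis using x by (simp add: field_simps)
  qed
  have "P * (1 / (1 + x k)) \<ge> (1 - S) * (1 - x k)"
  proof -
    have "P * (1 / (1 + x k)) \<ge> P * (1 - x k)" using P0 a by (intro mult_left_mono) auto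
    moreover have "P * (1 - x k) \<ge> (1 - S) * (1 - x k)" using Suc x unfolding P_def S_def
      by (intro mult_right_mono) auto
    ultimately show ?thesis by linarith
  qed
  moreover have "(1 - S) * (1 - x k) \<ge> 1 - (S + x k)" using S0 x
    by (simp add: algebra_simps)
  ultimately show ?case unfolding P_def S_def by simp
qed

lemma ln_gap: "ln (real n + 3) - ln (real n + 2) \<ge> 1 / (real n + 3)"
proof -
  have "ln ((real n + 2) / (real n + 3)) \<le> (real n + 2) / (real n + 3) - 1"
    by (rule ln_le_minus_one) auto
  also have "\<dots> = - 1 / (real n + 3)" by (simp add: field_simps)
  finally show ?thesis by (simp add: ln_div)
qed

lemma eps_sq_tel: "(eps n)^2 \<le> aa^2 * (1 / ln (real n + 2) - 1 / ln (real n + 3))"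
proof -
  define L2 where "L2 = ln (real n + 2)"
  define L3 where "L3 = ln (real n + 3)"
  have L2p: "L2 > 0" unfolding L2_def by simp
  have L23: "L2 \<le> L3" unfolding L2_def L3_def by simp
  have L3p: "L3 > 0" using L2p L23 by linarith
  have g: "L3 - L2 \<ge> 1 / (real n + 3)" using ln_gap unfolding L2_def L3_def .
  have "1 / L2 - 1 / L3 = (L3 - L2) / (L2 * L3)" using L2p L3p by (simp add: field_simps)
  also have "\<dots> \<ge> (L3 - L2) / (L3 * L3)"
    using L2p L3p L23 g by (intro divide_left_mono mult_right_mono mult_pos_pos) auto
  also have "(L3 - L2) / (L3 * L3) \<ge> (1 / (real n + 3)) / (L3 * L3)"
    using g L3p by (intro divide_right_mono) auto
  finally have *: "1 / L2 - 1 / L3 \<ge> 1 / ((real n + 3) * (L3 * L3))" by simp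
  have "(eps n)^2 = aa^2 * (1 / ((real n + 3) * (L3 * L3)))"
  proof -
    have sq: "(sqrt (real n + 3))^2 = real n + 3" by simp
    have "(eps n)^2 = aa^2 / ((sqrt (real n + 3))^2 * L3^2)"
      unfolding eps_def L3_def by (simp add: power_divide power_mult_distrib)
    also have "\<dots> = aa^2 * (1 / ((real n + 3) * (L3 * L3)))" unfolding sq by (simp add: power2_eq_square)
    finally show ?thesis .
  qed
  also have "\<dots> \<le> aa^2 * (1 / L2 - 1 / L3)" using * by (intro mult_left_mono) auto
  finally show ?thesis unfolding L2_def L3_def .
qed

lemma sum_eps_sq: "(\<Sum>n<k. (eps n)^2) \<le> 1/200"
proof -
  have "(\<Sum>n<k. (eps n)^2) \<le> (\<Sum>n<k. aa^2 * (1 / ln (real n + 2) - 1 / ln (real n + 3)))"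
    by (intro sum_mono eps_sq_tel)
  also have "\<dots> = aa^2 * (\<Sum>n<k. (- 1 / ln (real (Suc n) + 2)) - (- 1 / ln (real n + 2)))"
    by (simp add: sum_distrib_left algebra_simps)
  also have "(\<Sum>n<k. (- 1 / ln (real (Suc n) + 2)) - (- 1 / ln (real n + 2))) = - 1 / ln (real k + 2) + 1 / ln 2"
    by (subst sum_lessThan_telescope) simp
  finally have A: "(\<Sum>n<k. (eps n)^2) \<le> aa^2 * (- 1 / ln (real k + 2) + 1 / ln 2)" .
  have B: "- 1 / ln (real k + 2) + 1 / ln 2 \<le> 2"
  proof -
    have "1 / ln (2::real) \<le> 2" using ln2_ge by (simp add: field_simps)
    moreover have "- 1 / ln (real k + 2) \<le> 0" by simp
    ultimately show ?thesis by linarith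
  qed
  have "(\<Sum>n<k. (eps n)^2) \<le> aa^2 * 2"
    using A mult_left_mono[OF B, of "aa^2"] by simp
  moreover have "aa^2 * 2 = 1/200" by (simp add: aa_def power2_eq_square)
  ultimately show ?thesis by linarith
qed

lemma WW_ge: "WW k \<ge> 99/100"
proof -
  have "WW k \<ge> 1 - (\<Sum>n<k. 2 * (eps n)^2)"
    unfolding WW_def
  proof (rule prod_ge)
    fix n
    show "0 \<le> 2 * (eps n)^2" by simp
    have "eps n * eps n \<le> (1/10) * (1/10)" using eps_pos[of n] eps_le[of n] by (intro mult_mono) auto
    then show "2 * (eps n)^2 \<le> 1" by (simp add: power2_eq_square)
  qed
  moreover have "(\<Sum>n<k. 2 * (eps n)^2) \<le> 1/100"
    using sum_eps_sq[of k] by (simp add: sum_distrib_left[symmetric])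
  ultimately show ?thesis by linarith
qed

lemma ww_ge: "ww mh \<ge> 9801/10000"
proof -
  have "ww mh \<ge> (99/100) * (99/100)" unfolding ww_def
    using WW_ge WW_pos by (intro mult_mono) (auto intro: less_imp_le)
  then show ?thesis by simp
qed

lemma EL2: "measure_pmf.expectation (sys_run nu0 (BB True) m t) (\<lambda>s. (Lf (fst s))^2) \<le> 10000/9801"
proof -
  have "measure_pmf.expectation (sys_run nu0 (BB True) m t) (\<lambda>s. (Lf (fst s))^2)
     \<le> measure_pmf.expectation (sys_run nu0 (BB True) m t) (\<lambda>s. (10000/9801) * ((Lf (fst s))^2 * ww (fst s)))"
  proof (rule E_mono[OF fin_run])
    fix s
    have "1 \<le> (10000/9801) * ww (fst s)" using ww_ge[of "fst s"] by simp
    then have "(Lf (fst s))^2 * 1 \<le> (Lf (fst s))^2 * ((10000/9801) * ww (fst s))"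
      by (intro mult_left_mono) auto
    then show "(Lf (fst s))^2 \<le> (10000/9801) * ((Lf (fst s))^2 * ww (fst s))" by (simp add: algebra_simps)
  qed
  also have "\<dots> = (10000/9801) * measure_pmf.expectation (sys_run nu0 (BB True) m t) (\<lambda>s. (Lf (fst s))^2 * ww (fst s))"
    by simp
  also have "\<dots> \<le> (10000/9801) * 1" using chi2 by (intro mult_left_mono) auto
  finally show ?thesis by simp
qed

lemma EL1: "measure_pmf.expectation (sys_run nu0 (BB True) m t) (\<lambda>s. Lf (fst s)) = 1"
  using com[of m t "\<lambda>_. 1"] by simp

lemma eps_anti: "n \<le> k \<Longrightarrow> eps k \<le> eps n"
proof -
  assume nk: "n \<le> k"
  have a: "sqrt (real n + 3) \<le> sqrt (real k + 3)" using nk by simp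
  have b: "ln (real n + 3) \<le> ln (real k + 3)" using nk by simp
  have p: "0 < sqrt (real n + 3) * ln (real n + 3)" by simp
  have "sqrt (real n + 3) * ln (real n + 3) \<le> sqrt (real k + 3) * ln (real k + 3)"
    using a b by (intro mult_mono) auto
  then show ?thesis unfolding eps_def aa_def using p by (intro divide_left_mono) auto
qed

lemma SS_nonneg: "SS k \<ge> 0"
  unfolding SS_def using eps_pos by (intro sum_nonneg) (auto intro: less_imp_le)

lemma SS_mono: "a \<le> b \<Longrightarrow> SS a \<le> SS b"
  unfolding SS_def using eps_pos by (intro sum_mono2) (auto intro: less_imp_le)

lemma SS_sub: "SS (a + b) \<le> SS a + SS b"
proof (induction b)
  case 0
  then show ?case by (simp add: SS_def)
next
  case (Suc b)
  have "SS (a + Suc b) = SS (a + b) + eps (a + b) / 2" by (simp add: SS_Suc)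
  also have "\<dots> \<le> SS a + SS b + eps b / 2" using Suc eps_anti[of b "a + b"] by simp
  finally show ?case by (simp add: SS_Suc)
qed

lemma cnt_sum: "cnt True mh + cnt False mh = length mh"
  unfolding cnt_def using sum_length_filter_compl[of "\<lambda>p. fst p" mh] by simp

lemma E_lin:
  fixes f g :: "'a \<Rightarrow> real"
  assumes "finite (set_pmf p)"
  shows "measure_pmf.expectation p (\<lambda>x. a + b * f x + c * g x)
       = a + b * measure_pmf.expectation p f + c * measure_pmf.expectation p g"
  using assms by (simp add: integrable_measure_pmf_finite)

lemma abs_le_sq: "\<bar>x::real\<bar> \<le> 1/4 + x^2"
proof -
  have "0 \<le> (\<bar>x\<bar> - 1/2)^2" by simp
  then show ?thesis by (simp add: power2_eq_square algebra_simps abs_mult_self_eq)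
qed

lemma R_sum:
  "measure_pmf.expectation (sys_run nu0 (BB True) m t) (\<lambda>s. SS (cnt True (fst s)))
   + measure_pmf.expectation (sys_run nu0 (BB False) m t) (\<lambda>s. SS (cnt False (fst s)))
   \<ge> SS t / 2"
proof -
  define S where "S = SS t"
  let ?E = "measure_pmf.expectation (sys_run nu0 (BB True) m t)"
  have S0: "S \<ge> 0" unfolding S_def by (rule SS_nonneg)
  have "?E (\<lambda>s. SS (cnt True (fst s))) + ?E (\<lambda>s. Lf (fst s) * SS (cnt False (fst s)))
      = ?E (\<lambda>s. SS (cnt True (fst s)) + Lf (fst s) * SS (cnt False (fst s)))"
    by (simp add: integrable_measure_pmf_finite fin_run)
  also have "\<dots> \<ge> ?E (\<lambda>s. (3/4 * S - S) + (2 * S) * Lf (fst s) + (- S) * (Lf (fst s))^2)"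
  proof (rule E_mono[OF fin_run])
    fix s assume s: "s \<in> set_pmf (sys_run nu0 (BB True) m t)"
    define L where "L = Lf (fst s)"
    define A where "A = SS (cnt True (fst s))"
    define B where "B = SS (cnt False (fst s))"
    have len: "length (fst s) = t" using inv_run[OF s] by (simp add: invs_def)
    have AB: "S \<le> A + B" unfolding S_def A_def B_def
      using SS_sub[of "cnt True (fst s)" "cnt False (fst s)"] cnt_sum[of "fst s"] len by simp
    have B0: "0 \<le> B" unfolding B_def by (rule SS_nonneg)
    have BS: "B \<le> S" unfolding B_def S_def
      using cnt_sum[of "fst s"] len by (intro SS_mono) linarith
    have "(L - 1) * B \<ge> - \<bar>L - 1\<bar> * B"
      using mult_right_mono[OF _ B0, of "- \<bar>L - 1\<bar>" "L - 1"] by simp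
    moreover have "\<bar>L - 1\<bar> * B \<le> \<bar>L - 1\<bar> * S" using BS by (intro mult_left_mono) auto
    moreover have "\<bar>L - 1\<bar> * S \<le> (1/4 + (L - 1)^2) * S" using S0 abs_le_sq[of "L - 1"]
      by (intro mult_right_mono) auto
    moreover have "L * B = B + (L - 1) * B" by (simp add: algebra_simps)
    ultimately have "A + L * B \<ge> S - (1/4 + (L - 1)^2) * S" using AB
      by linarith
    then show "(3/4 * S - S) + (2 * S) * Lf (fst s) + (- S) * (Lf (fst s))^2 \<le> SS (cnt True (fst s)) + Lf (fst s) * SS (cnt False (fst s))"
      unfolding L_def[symmetric] A_def[symmetric] B_def[symmetric]
      by (simp add: power2_eq_square algebra_simps)
  qed
  also have "?E (\<lambda>s. (3/4 * S - S) + (2 * S) * Lf (fst s) + (- S) * (Lf (fst s))^2)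
     = (3/4 * S - S) + (2 * S) * ?E (\<lambda>s. Lf (fst s)) + (- S) * ?E (\<lambda>s. (Lf (fst s))^2)"
    by (rule E_lin[OF fin_run])
  also have "\<dots> = 7/4 * S - S * ?E (\<lambda>s. (Lf (fst s))^2)" by (simp add: EL1 algebra_simps)
  also have "\<dots> \<ge> 7/4 * S - S * (10000/9801)"
    using mult_left_mono[OF EL2[of m t] S0] by linarith
  finally have "?E (\<lambda>s. SS (cnt True (fst s))) + ?E (\<lambda>s. Lf (fst s) * SS (cnt False (fst s))) \<ge> 7/4 * S - S * (10000/9801)" .
  moreover have "7/4 * S - S * (10000/9801) \<ge> S / 2" using S0 by simp
  moreover note com[of m t "\<lambda>mh. SS (cnt False mh)"]
  ultimately show ?thesis unfolding S_def by simp
qed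

lemma SS_lower:
  assumes T: "T \<ge> 2"
  shows "SS T \<ge> aa / 8 * sqrt (real T) / ln (real T)"
proof -
  define x where "x = real T"
  have x2: "x \<ge> 2" using T unfolding x_def by simp
  have lnx: "ln x > 0" using x2 by simp
  have sx: "sqrt x > 0" using x2 by simp
  have s1: "sqrt (x + 2) \<le> 2 * sqrt x"
  proof -
    have "sqrt (x + 2) \<le> sqrt (4 * x)" using x2 by simp
    also have "\<dots> = 2 * sqrt x" by (simp add: real_sqrt_mult)
    finally show ?thesis .
  qed
  have l1: "ln (x + 2) \<le> 2 * ln x"
  proof -
    have "2 * x \<le> x * x" using x2 by (intro mult_right_mono) auto
    then have "x + 2 \<le> x * x" using x2 by linarith
    then have "ln (x + 2) \<le> ln (x * x)" using x2 by simp
    also have "\<dots> = 2 * ln x" using x2 by (simp add: ln_mult)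
    finally show ?thesis .
  qed
  define e where "e = aa / (4 * (sqrt x * ln x))"
  have eps_ge: "eps n \<ge> e" if "n < T" for n
  proof -
    have nn: "real n + 3 \<le> x + 2" using that unfolding x_def by simp
    have p: "0 < sqrt (real n + 3) * ln (real n + 3)" by simp
    have "sqrt (real n + 3) * ln (real n + 3) \<le> sqrt (x + 2) * ln (x + 2)"
      using nn by (intro mult_mono) auto
    also have "\<dots> \<le> (2 * sqrt x) * (2 * ln x)"
      using s1 l1 x2 by (intro mult_mono) auto
    finally have "sqrt (real n + 3) * ln (real n + 3) \<le> 4 * (sqrt x * ln x)" by simp
    then show ?thesis unfolding eps_def e_def aa_def using p sx lnx by (intro divide_left_mono) auto
  qed
  have "SS T \<ge> (\<Sum>n<T. e / 2)" unfolding SS_def using eps_ge by (intro sum_mono) auto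
  also have "(\<Sum>n<T. e / 2) = x * e / 2" by (simp add: x_def)
  also have "x * e / 2 = aa / 8 * (x / sqrt x) / ln x" unfolding e_def using sx lnx by (simp add: field_simps)
  also have "x / sqrt x = sqrt x" using x2 by (simp add: real_div_sqrt)
  finally show ?thesis by (simp add: x_def)
qed

theorem mainTheorem2:
  shows "\<exists>(nu::env) (B1::base_alg) (B2::base_alg).
    (\<forall>a. set_pmf (nu a) \<subseteq> {0..1}) \<and>
    (\<forall>h. set_pmf (B1 h) \<subseteq> {a. arm_mean nu a = opt_mean nu}) \<and>
    (\<exists>c>0. \<exists>T0::nat. \<forall>m::master_alg. \<forall>T\<ge>T0.
        master_regret nu B1 B2 m T \<ge> c * sqrt (real T) / ln (real T))"
proof (rule exI[of _ nu0], rule exI[of _ Bopt], rule exI[of _ Bbad], intro conjI)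
  show "\<forall>a. set_pmf (nu0 a) \<subseteq> {0..1}" using set_nu0 by fastforce
  have om: "opt_mean nu0 = 1/2" by (simp add: opt_mean_def arm_mean_T arm_mean_F)
  show "\<forall>h. set_pmf (Bopt h) \<subseteq> {a. arm_mean nu0 a = opt_mean nu0}"
    by (simp add: Bopt_def om arm_mean_T)
  show "\<exists>c>0. \<exists>T0::nat. \<forall>m::master_alg. \<forall>T\<ge>T0.
        master_regret nu0 Bopt Bbad m T \<ge> c * sqrt (real T) / ln (real T)"
  proof (intro exI[of _ "aa/32"] conjI exI[of _ "2::nat"] allI impI)
    show "aa/32 > 0" by (simp add: aa_def)
    fix m :: master_alg and T :: nat
    assume T: "2 \<le> T"
    have b1: "(\<lambda>j. if j then Bbad else Bopt) = BB True" by (auto simp: BB_def)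
    have b2: "(\<lambda>j. if j then Bopt else Bbad) = BB False" by (auto simp: BB_def)
    have "master_regret nu0 Bopt Bbad m T =
       (measure_pmf.expectation (sys_run nu0 (BB True) m T) (\<lambda>s. SS (cnt True (fst s)))
        + measure_pmf.expectation (sys_run nu0 (BB False) m T) (\<lambda>s. SS (cnt False (fst s)))) / 2"
      unfolding master_regret_def b1 b2 exp_reward om by (simp add: field_simps)
    then have "master_regret nu0 Bopt Bbad m T \<ge> SS T / 4" using R_sum[of T m] by simp
    moreover have "SS T / 4 \<ge> aa/32 * sqrt (real T) / ln (real T)"
      using SS_lower[OF T] by simp
    ultimately show "master_regret nu0 Bopt Bbad m T \<ge> aa/32 * sqrt (real T) / ln (real T)" by linarith
  qed
qed

end
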